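(* Let $q>3$ be prime and $A\in\mathbb{F}_q[T]$ monic irreducible with $a=\deg A$. Then \[ \sum_{\substack{X \neq 0 \\ A \mid X}} \frac{1}{|X|^{2s}} \sum_{\substack{Y \bmod AX \\ Y \equiv 1 \bmod A \\ (X, Y) = 1}} 1 = \frac{q^{a(1-2s)}}{1-q^{-2as}} \frac{\zeta_{\mathbb{F}_{q}[T]}(2s-1)}{\zeta_{\mathbb{F}_{q}[T]}(2s)}, \] where $X$ runs over nonzero monic polynomials.
   Context: $|X|=q^{\deg X}$; $(X,Y)$ is the monic gcd; $\zeta_{\mathbb{F}_q[T]}(s)=\sum_{X\text{ monic}}|X|^{-s}=\frac{1}{1-q^{1-s}}$. *)

theory Defs
  imports "HOL-Analysis.Analysis" "HOL-Computational_Algebra.Polynomial_Factorial"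
begin

text \<open>Polynomials over a finite field of prime order q are modelled as
  'a poly with 'a :: {finite, field} and CARD('a) = q prime.\<close>

definition pnorm :: "'a::{finite,field} poly \<Rightarrow> complex" where
  "pnorm X = of_nat (CARD('a) ^ degree X)"

definition zeta_Fq :: "'a::{finite,field} itself \<Rightarrow> complex \<Rightarrow> complex" where
  "zeta_Fq TYPE('a) s = infsum (\<lambda>X::'a poly. pnorm X powr (-s)) {X. lead_coeff X = 1}"

text \<open>Number of residues Y mod AX with Y = 1 mod A and (X,Y) = 1.
  Residues mod AX are represented by the polynomials of degree < deg(AX).\<close>
definition count_Y :: "'a::{finite,field} poly \<Rightarrow> 'a poly \<Rightarrow> nat" where
  "count_Y A X = card {Y. degree Y < degree (A * X) \<and> Y mod A = 1 mod A \<and> coprime X Y}"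

end

theory Submission
  imports Defs
begin


lemma of_nat_pow_powr:
  assumes "0 < m"
  shows "(of_nat (m ^ n) :: complex) powr v = (of_nat m powr v) ^ n"
proof (induction n)
  case 0
  then show ?case by (simp add: powr_def)
next
  case (Suc n)
  have "(of_nat (m ^ Suc n) :: complex) = of_nat m * of_nat (m ^ n)" by simp
  also have "\<dots> powr v = of_nat m powr v * of_nat (m ^ n) powr v"
    by (rule powr_times_real) auto
  finally show ?case using Suc by simp
qed

lemma pnorm_powr:
  "pnorm (X :: 'a::{finite,field} poly) powr v = (of_nat CARD('a) powr v) ^ degree X"
  unfolding pnorm_def by (rule of_nat_pow_powr) simp

lemma powr_mult_nat:
  assumes "0 < m"
  shows "(of_nat m :: complex) powr (of_nat n * u) = (of_nat m powr u) ^ n"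
  using assms by (simp add: powr_def exp_of_nat_mult[symmetric] mult_ac)

lemma norm_of_nat_powr: "norm ((of_nat m :: complex) powr v) = real m powr Re v"
  by (subst norm_powr_real_powr) auto

definition Pd :: "nat \<Rightarrow> 'a::zero poly set" where "Pd n = {W. \<forall>i\<ge>n. coeff W i = 0}"

lemma Pd_iff: "W \<in> Pd n \<longleftrightarrow> W = 0 \<or> degree W < n"
proof
  assume "W \<in> Pd n"
  then have h: "\<forall>i\<ge>n. coeff W i = 0" by (simp add: Pd_def)
  show "W = 0 \<or> degree W < n"
  proof (rule ccontr)
    assume "\<not> (W = 0 \<or> degree W < n)"
    then have "W \<noteq> 0" "degree W \<ge> n" by auto
    then show False using h leading_coeff_0_iff by blast
  qed
next
  assume "W = 0 \<or> degree W < n"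
  then show "W \<in> Pd n" by (auto simp: Pd_def coeff_eq_0)
qed

lemma bij_Pd: "bij_betw (\<lambda>W. restrict (coeff W) {..<n}) (Pd n :: 'a::zero poly set) ({..<n} \<rightarrow>\<^sub>E (UNIV :: 'a set))"
  unfolding bij_betw_def
proof
  show "inj_on (\<lambda>W. restrict (coeff W) {..<n}) (Pd n :: 'a poly set)"
  proof (rule inj_onI)
    fix V W :: "'a poly" assume V: "V \<in> Pd n" and W: "W \<in> Pd n"
      and eq: "restrict (coeff V) {..<n} = restrict (coeff W) {..<n}"
    show "V = W"
    proof (rule poly_eqI)
      fix i show "coeff V i = coeff W i"
      proof (cases "i < n")
        case True then show ?thesis using fun_cong[OF eq, of i] by simp
      next
        case False then show ?thesis using V W by (simp add: Pd_def)
      qed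
    qed
  qed
  show "(\<lambda>W. restrict (coeff W) {..<n}) ` Pd n = ({..<n} \<rightarrow>\<^sub>E (UNIV :: 'a set))"
  proof
    show "(\<lambda>W. restrict (coeff W) {..<n}) ` Pd n \<subseteq> ({..<n} \<rightarrow>\<^sub>E (UNIV :: 'a set))" by (intro image_subsetI) (simp only: restrict_PiE_iff, simp)
    show "({..<n} \<rightarrow>\<^sub>E (UNIV :: 'a set)) \<subseteq> (\<lambda>W. restrict (coeff W) {..<n}) ` Pd n"
    proof
      fix f assume f: "f \<in> ({..<n} \<rightarrow>\<^sub>E (UNIV :: 'a set))"
      define W where "W = Poly (map f [0..<n])"
      have cW: "coeff W i = (if i < n then f i else 0)" for i
        by (simp add: W_def coeff_Poly_eq nth_default_def)
      have W1: "W \<in> Pd n" by (simp add: Pd_def cW)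
      have W2: "restrict (coeff W) {..<n} = f"
      proof (rule ext)
        fix i show "restrict (coeff W) {..<n} i = f i"
        proof (cases "i < n")
          case True then show ?thesis by (simp add: cW)
        next
          case False then show ?thesis using PiE_arb[OF f, of i] by simp
        qed
      qed
      show "f \<in> (\<lambda>W. restrict (coeff W) {..<n}) ` Pd n" using W1 W2 by blast
    qed
  qed
qed

lemma card_Pd: "card (Pd n :: 'a::{finite,zero} poly set) = CARD('a) ^ n"
  using bij_betw_same_card[OF bij_Pd[of n]] by (simp add: card_PiE)

lemma finite_Pd: "finite (Pd n :: 'a::{finite,zero} poly set)"
proof -
  have fin: "finite ({..<n} \<rightarrow>\<^sub>E (UNIV::'a set))" by (intro finite_PiE) auto
  have b: "bij_betw (\<lambda>W. restrict (coeff W) {..<n}) (Pd n :: 'a poly set) ({..<n} \<rightarrow>\<^sub>E (UNIV :: 'a set))" by (rule bij_Pd)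
  show ?thesis using bij_betw_finite[OF b] fin by simp
qed

definition Mon :: "nat \<Rightarrow> 'a::field poly set" where
  "Mon n = {X. degree X = n \<and> lead_coeff X = 1}"

lemma Mon_iff: "X \<in> Mon n \<longleftrightarrow> coeff X n = 1 \<and> (\<forall>i>n. coeff X i = 0)"
proof
  assume "X \<in> Mon n" then show "coeff X n = 1 \<and> (\<forall>i>n. coeff X i = 0)"
    by (auto simp: Mon_def coeff_eq_0)
next
  assume h: "coeff X n = 1 \<and> (\<forall>i>n. coeff X i = 0)"
  then have "degree X \<le> n" by (auto intro: degree_le)
  moreover have "n \<le> degree X" using h by (auto intro: le_degree)
  ultimately show "X \<in> Mon n" using h by (auto simp: Mon_def)
qed

lemma bij_Mon: "bij_betw (\<lambda>W. W + monom 1 n) (Pd n :: 'a::field poly set) (Mon n)"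
proof (rule bij_betwI')
  fix x y :: "'a poly" show "(x + monom 1 n = y + monom 1 n) = (x = y)" by simp
next
  fix x :: "'a poly" assume "x \<in> Pd n"
  then show "x + monom 1 n \<in> Mon n" by (auto simp: Mon_iff Pd_def coeff_monom)
next
  fix y :: "'a poly" assume "y \<in> Mon n"
  then have "y - monom 1 n \<in> Pd n"
    by (auto simp: Mon_iff Pd_def coeff_monom)
  then show "\<exists>x\<in>Pd n. y = x + monom 1 n" by (intro bexI[of _ "y - monom 1 n"]) auto
qed

lemma card_Mon: "card (Mon n :: 'a::{finite,field} poly set) = CARD('a) ^ n"
  using bij_betw_same_card[OF bij_Mon[of n]] card_Pd by metis

lemma finite_Mon: "finite (Mon n :: 'a::{finite,field} poly set)"
  using bij_betw_finite[OF bij_Mon[of n]] finite_Pd by metis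



lemma has_sum_by_degree:
  fixes f :: "'b::zero poly \<Rightarrow> complex"
  assumes fin: "\<And>n. finite {X\<in>S. degree X = n}"
    and summ: "summable (\<lambda>n. \<Sum>X\<in>{X\<in>S. degree X = n}. norm (f X))"
  shows "(f has_sum (\<Sum>n. \<Sum>X\<in>{X\<in>S. degree X = n}. f X)) S"
proof -
  define B where "B = (\<lambda>n. {X\<in>S. degree X = n})"
  define g where "g = (\<lambda>p::nat \<times> 'b poly. f (snd p))"
  have bij: "bij_betw (\<lambda>X. (degree X, X)) S (Sigma UNIV B)"
    by (rule bij_betwI[where g=snd]) (auto simp: B_def)
  have ns: "(\<lambda>p. norm (g p)) summable_on Sigma UNIV B"
  proof (rule summable_on_SigmaI[where g = "\<lambda>n. \<Sum>X\<in>B n. norm (f X)"])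
    fix n :: nat
    show "((\<lambda>y. norm (g (n, y))) has_sum (\<Sum>X\<in>B n. norm (f X))) (B n)"
      using fin by (simp add: g_def B_def)
  next
    show "(\<lambda>n. \<Sum>X\<in>B n. norm (f X)) summable_on UNIV"
      using summ by (subst summable_on_UNIV_nonneg_real_iff) (auto simp: B_def intro: sum_nonneg)
  next
    fix x y show "0 \<le> norm (g (x, y))" by simp
  qed
  then have "g summable_on Sigma UNIV B"
    by (rule abs_summable_summable)
  then obtain T where T: "(g has_sum T) (Sigma UNIV B)"
    by (auto simp: summable_on_def)
  have "((\<lambda>n. \<Sum>X\<in>B n. f X) has_sum T) UNIV"
    by (rule has_sum_Sigma'[OF T]) (use fin in \<open>simp add: g_def B_def\<close>)
  then have "(\<lambda>n. \<Sum>X\<in>B n. f X) sums T" by (rule has_sum_imp_sums)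
  then have Teq: "T = (\<Sum>n. \<Sum>X\<in>B n. f X)" by (simp add: sums_iff)
  have "((\<lambda>X. g (degree X, X)) has_sum T) S"
    using has_sum_reindex_bij_betw[OF bij, of g T] T by simp
  then show ?thesis by (simp add: g_def Teq B_def)
qed

lemma monic_deg_eq: "{X\<in>{X. lead_coeff X = 1}. degree X = n} = Mon n"
  by (auto simp: Mon_def)

lemma zeta_has_sum:
  fixes u :: complex
  assumes "norm (of_nat CARD('a) * u) < 1"
  shows "((\<lambda>X::'a::{finite,field} poly. u ^ degree X) has_sum (1 / (1 - of_nat CARD('a) * u))) {X. lead_coeff X = 1}"
proof -
  let ?q = "CARD('a)"
  have e1: "(\<Sum>X\<in>(Mon n :: 'a poly set). u ^ degree X) = (of_nat ?q * u) ^ n" for n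
  proof -
    have "(\<Sum>X\<in>(Mon n :: 'a poly set). u ^ degree X) = (\<Sum>X\<in>(Mon n :: 'a poly set). u ^ n)"
      by (rule sum.cong) (auto simp: Mon_def)
    also have "\<dots> = of_nat ?q ^ n * u ^ n" using card_Mon[of n, where 'a='a] by simp
    finally show ?thesis by (simp add: power_mult_distrib)
  qed
  have e2: "(\<Sum>X\<in>(Mon n :: 'a poly set). norm (u ^ degree X)) = (norm (of_nat ?q * u)) ^ n" for n
  proof -
    have "(\<Sum>X\<in>(Mon n :: 'a poly set). norm (u ^ degree X)) = (\<Sum>X\<in>(Mon n :: 'a poly set). norm u ^ n)"
      by (rule sum.cong) (auto simp: Mon_def norm_power)
    also have "\<dots> = real ?q ^ n * norm u ^ n" using card_Mon[of n, where 'a='a] by simp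
    finally show ?thesis by (simp add: power_mult_distrib norm_mult)
  qed
  have "((\<lambda>X::'a poly. u ^ degree X) has_sum (\<Sum>n. \<Sum>X\<in>{X\<in>{X::'a poly. lead_coeff X = 1}. degree X = n}. u ^ degree X)) {X. lead_coeff X = 1}"
  proof (rule has_sum_by_degree)
    show "finite {X\<in>{X::'a poly. lead_coeff X = 1}. degree X = n}" for n
      unfolding monic_deg_eq by (rule finite_Mon)
    show "summable (\<lambda>n. \<Sum>X\<in>{X\<in>{X::'a poly. lead_coeff X = 1}. degree X = n}. norm (u ^ degree X))"
      unfolding monic_deg_eq e2 using assms by (intro summable_geometric) simp
  qed
  then show ?thesis unfolding monic_deg_eq e1 using suminf_geometric[OF assms] by simp
qed

lemma zeta_Fq_eq:
  assumes "Re w > 1"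
  shows "zeta_Fq TYPE('a::{finite,field}) w = 1 / (1 - of_nat CARD('a) * (of_nat CARD('a) powr (-w)))"
proof -
  let ?q = "CARD('a)"
  let ?u = "(of_nat ?q :: complex) powr (-w)"
  have q1: "real ?q > 1"
  proof -
    have "card {0::'a, 1} \<le> CARD('a)" by (rule card_mono) auto
    then show ?thesis by simp
  qed
  have "norm (of_nat ?q * ?u) = real ?q * real ?q powr (- Re w)"
    by (simp add: norm_mult norm_of_nat_powr)
  also have "\<dots> = real ?q powr (1 - Re w)"
    using q1 by (simp add: powr_diff powr_minus divide_inverse)
  also have "\<dots> < 1" using q1 assms by (intro powr_less_one) auto
  finally have lt: "norm (of_nat ?q * ?u) < 1" .
  have "((\<lambda>X::'a poly. pnorm X powr (-w)) has_sum (1 / (1 - of_nat ?q * ?u))) {X. lead_coeff X = 1}"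
    using zeta_has_sum[OF lt] by (simp add: pnorm_powr)
  then show ?thesis unfolding zeta_Fq_def by (rule infsumI)
qed



lemma bezout_poly:
  fixes X Y :: "'a::field poly"
  assumes "X \<noteq> 0"
  shows "\<exists>D u v. D = u * X + v * Y \<and> D dvd X \<and> D dvd Y \<and> lead_coeff D = 1"
proof -
  define I where "I = {D. D \<noteq> 0 \<and> (\<exists>u v. D = u * X + v * Y)}"
  have "X = 1 * X + 0 * Y" by simp
  then have XI: "X \<in> I" using assms unfolding I_def by blast
  define n where "n = (LEAST n. \<exists>D\<in>I. degree D = n)"
  obtain D0 where D0: "D0 \<in> I" "degree D0 = n"
    using LeastI_ex[of "\<lambda>n. \<exists>D\<in>I. degree D = n"] XI unfolding n_def by blast
  have min: "n \<le> degree D" if "D \<in> I" for D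
    unfolding n_def by (rule Least_le) (use that in blast)
  from D0(1) obtain u0 v0 where uv: "D0 = u0 * X + v0 * Y" "D0 \<noteq> 0" unfolding I_def by blast
  have dv: "D0 dvd Z" if Z: "Z = a * X + b * Y" for Z a b
  proof (rule ccontr)
    assume nd: "\<not> D0 dvd Z"
    then have m0: "Z mod D0 \<noteq> 0" by (simp add: dvd_eq_mod_eq_0)
    define k where "k = Z div D0"
    have "Z mod D0 = Z - k * D0" unfolding k_def by (rule minus_div_mult_eq_mod[symmetric])
    also have "\<dots> = (a - k * u0) * X + (b - k * v0) * Y" unfolding Z uv(1) by (simp add: algebra_simps)
    finally have "Z mod D0 = (a - k * u0) * X + (b - k * v0) * Y" .
    then have "Z mod D0 \<in> I" using m0 unfolding I_def by blast
    then have "n \<le> degree (Z mod D0)" by (rule min)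
    moreover have "degree (Z mod D0) < degree D0" by (rule degree_mod_less') (use uv m0 in auto)
    ultimately show False using D0(2) by linarith
  qed
  have dX: "D0 dvd X" by (rule dv[of X 1 0]) simp
  have dY: "D0 dvd Y" by (rule dv[of Y 0 1]) simp
  define c where "c = inverse (lead_coeff D0)"
  have lc: "lead_coeff D0 \<noteq> 0" using uv(2) by simp
  define D where "D = smult c D0"
  have "D = (smult c u0) * X + (smult c v0) * Y" unfolding D_def uv(1) by (simp add: smult_add_right)
  moreover have e: "D0 = smult (lead_coeff D0) D"
    unfolding D_def c_def using lc by (simp add: smult_smult)
  have "D dvd smult (lead_coeff D0) D" by (rule dvd_smult) simp
  then have "D dvd D0" using e by simp
  then have "D dvd X" "D dvd Y" using dX dY dvd_trans by blast+
  moreover have "lead_coeff D = 1" unfolding D_def c_def using lc by simp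
  ultimately show ?thesis by blast
qed

lemma unit_monic_eq_1:
  fixes D :: "'a::field poly"
  assumes "is_unit D" "lead_coeff D = 1"
  shows "D = 1"
proof -
  have "D \<noteq> 0" using assms by auto
  then have "degree D = 0" using assms is_unit_iff_degree by blast
  show ?thesis
  proof (rule poly_eqI)
    fix i show "coeff D i = coeff 1 i"
      using assms \<open>degree D = 0\<close> by (cases i) (auto simp: coeff_eq_0)
  qed
qed

lemma coprime_bezout:
  fixes X Y :: "'a::field poly"
  shows "coprime X Y \<longleftrightarrow> (\<exists>u v. u * X + v * Y = 1)"
proof
  assume cp: "coprime X Y"
  show "\<exists>u v. u * X + v * Y = 1"
  proof (cases "X = 0")
    case True
    then have "is_unit Y" using cp by (simp add: coprime_def)
    then obtain k where "1 = Y * k" by (auto elim: dvdE)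
    then have "0 * X + k * Y = 1" by (simp add: mult.commute)
    then show ?thesis by blast
  next
    case False
    then obtain D u v where D: "D = u * X + v * Y" "D dvd X" "D dvd Y" "lead_coeff D = 1"
      using bezout_poly by blast
    then have "is_unit D" using cp by (auto simp: coprime_def)
    then have "D = 1" using D(4) by (rule unit_monic_eq_1)
    then show ?thesis using D(1) by metis
  qed
next
  assume "\<exists>u v. u * X + v * Y = 1"
  then obtain u v where uv: "u * X + v * Y = 1" by blast
  show "coprime X Y"
  proof (rule coprimeI)
    fix c assume "c dvd X" "c dvd Y"
    then have "c dvd u * X + v * Y" by simp
    then show "is_unit c" using uv by simp
  qed
qed

lemma coprime_sym_poly: "coprime (X::'a::field poly) Y \<longleftrightarrow> coprime Y X"
  by (auto simp: coprime_def)

lemma coprime_mult_poly: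
  fixes X U V :: "'a::field poly"
  assumes "coprime X U" "coprime X V"
  shows "coprime X (U * V)"
proof -
  obtain u1 v1 where 1: "u1 * X + v1 * U = 1" using assms(1) coprime_bezout by blast
  obtain u2 v2 where 2: "u2 * X + v2 * V = 1" using assms(2) coprime_bezout by blast
  have "(u1 * X + v1 * U) * (u2 * X + v2 * V) = 1" using 1 2 by simp
  then have "(u1 * u2 * X + u1 * v2 * V + v1 * U * u2) * X + (v1 * v2) * (U * V) = 1" by (simp add: algebra_simps)
  then show ?thesis using coprime_bezout by blast
qed

lemma coprime_power_poly:
  fixes X A :: "'a::field poly"
  assumes "coprime X A"
  shows "coprime X (A^m)"
proof (induction m)
  case 0
  then show ?case by (simp add: coprime_def)
next
  case (Suc m)
  then show ?case using coprime_mult_poly[OF assms Suc] by simp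
qed

lemma irr_coprime:
  fixes A U :: "'a::field poly"
  assumes "irreducible A" "\<not> A dvd U"
  shows "coprime A U"
proof (rule coprimeI)
  fix c assume c: "c dvd A" "c dvd U"
  then obtain k where k: "A = c * k" by (auto elim: dvdE)
  then have "is_unit c \<or> is_unit k" using assms(1) irreducibleD by blast
  moreover have "\<not> is_unit k"
  proof
    assume "is_unit k"
    then have "A dvd c" using k by (simp add: dvd_mult_unit_iff)
    then have "A dvd U" using c(2) dvd_trans by blast
    then show False using assms(2) by simp
  qed
  ultimately show "is_unit c" by blast
qed

lemma irr_prime:
  fixes A U V :: "'a::field poly"
  assumes "irreducible A" "A dvd U * V" "\<not> A dvd U"
  shows "A dvd V"
proof -
  obtain u v where uv: "u * A + v * U = 1" using irr_coprime[OF assms(1,3)] coprime_bezout by blast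
  have "V = (u * A + v * U) * V" using uv by simp
  also have "\<dots> = (u * V) * A + v * (U * V)" by (simp add: algebra_simps)
  also have "A dvd \<dots>" using assms(2) by simp
  finally show ?thesis .
qed

lemma coprime_dvd_poly:
  fixes U W V :: "'a::field poly"
  assumes "coprime W U" "W dvd U * V"
  shows "W dvd V"
proof -
  obtain a b where ab: "a * W + b * U = 1" using assms(1) coprime_bezout by blast
  have "V = (a * W + b * U) * V" using ab by simp
  also have "\<dots> = (a * V) * W + b * (U * V)" by (simp add: algebra_simps)
  also have "W dvd \<dots>" using assms(2) by simp
  finally show ?thesis .
qed

lemma irr_degree_pos:
  fixes A :: "'a::field poly"
  assumes "irreducible A"
  shows "degree A > 0"
proof -
  have "A \<noteq> 0" "\<not> is_unit A" using assms by (auto simp: irreducible_def)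
  then show ?thesis using is_unit_iff_degree by blast
qed

lemma A_free_decomp:
  fixes A X :: "'a::field poly"
  assumes "irreducible A" "X \<noteq> 0"
  shows "\<exists>m Z. X = A^m * Z \<and> \<not> A dvd Z"
  using assms(2)
proof (induction "degree X" arbitrary: X rule: less_induct)
  case less
  show ?case
  proof (cases "A dvd X")
    case False
    then show ?thesis by (intro exI[of _ 0] exI[of _ X]) simp
  next
    case True
    then obtain X1 where X1: "X = A * X1" by (auto elim: dvdE)
    have "X1 \<noteq> 0" "A \<noteq> 0" using less.prems X1 by auto
    then have "degree X = degree A + degree X1" using X1 by (simp add: degree_mult_eq)
    then have "degree X1 < degree X" using irr_degree_pos[OF assms(1)] by simp
    then obtain m Z where "X1 = A^m * Z" "\<not> A dvd Z" using less.hyps \<open>X1 \<noteq> 0\<close> by blast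
    then show ?thesis using X1 by (intro exI[of _ "Suc m"] exI[of _ Z]) (simp add: mult.assoc)
  qed
qed

lemma exists_mult_unit:
  fixes A X c :: "'a::field poly"
  assumes "irreducible A" "X \<noteq> 0" "\<not> A dvd c"
  shows "\<exists>U. coprime U X \<and> U mod A = c mod A"
proof -
  obtain m Z where mZ: "X = A^m * Z" "\<not> A dvd Z" using A_free_decomp[OF assms(1,2)] by blast
  obtain u v where uv: "u * A + v * Z = 1" using irr_coprime[OF assms(1) mZ(2)] coprime_bezout by blast
  define U where "U = c * v * Z + u * A"
  have "U - c = A * (u - c * u)"
  proof -
    have "U - c = c * v * Z + u * A - c * (u * A + v * Z)" using uv by (simp add: U_def)
    then show ?thesis by (simp add: algebra_simps)
  qed
  then have d: "A dvd U - c" by simp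
  then have modeq: "U mod A = c mod A" by (simp add: mod_eq_dvd_iff)
  have "1 * U + (v - c * v) * Z = 1"
  proof -
    have "1 * U + (v - c * v) * Z = v * Z + u * A" by (simp add: U_def algebra_simps)
    then show ?thesis using uv by (simp add: algebra_simps)
  qed
  then have cZ: "coprime U Z" using coprime_bezout by blast
  have "\<not> A dvd U"
  proof
    assume "A dvd U"
    then have "A dvd U - (U - c)" using d by (rule dvd_diff)
    then show False using assms(3) by simp
  qed
  then have "coprime U A" using irr_coprime[OF assms(1)] coprime_sym_poly by blast
  then have "coprime U (A^m)" by (rule coprime_power_poly)
  then have "coprime U X" using coprime_mult_poly[OF _ cZ] mZ(1) by simp
  then show ?thesis using modeq by blast
qed

lemma exists_inverse_mod:
  fixes A r :: "'a::field poly"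
  assumes "irreducible A" "\<not> A dvd r"
  shows "\<exists>c. \<not> A dvd c \<and> (c * r) mod A = 1 mod A"
proof -
  obtain u v where uv: "u * A + v * r = 1" using irr_coprime[OF assms] coprime_bezout by blast
  have "v * r - 1 = v * r - (u * A + v * r)" using uv by simp
  also have "\<dots> = A * (-u)" by (simp add: algebra_simps)
  finally have "v * r - 1 = A * (-u)" .
  then have m: "(v * r) mod A = 1 mod A" by (simp add: mod_eq_dvd_iff)
  have "\<not> A dvd v"
  proof
    assume "A dvd v"
    then have "A dvd u * A + v * r" by simp
    then have "is_unit A" using uv by simp
    then show False using assms(1) by (simp add: irreducible_def)
  qed
  then show ?thesis using m by blast
qed



definition Fset :: "'a::field poly \<Rightarrow> 'a poly \<Rightarrow> 'a poly set" where
  "Fset A X = {Y. degree Y < degree (A * X) \<and> \<not> A dvd Y}"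
definition F'set :: "'a::field poly \<Rightarrow> 'a poly \<Rightarrow> 'a poly set" where
  "F'set A X = {Y. degree Y < degree (A * X) \<and> \<not> A dvd Y \<and> coprime X Y}"
definition cls :: "'a::field poly \<Rightarrow> 'a poly \<Rightarrow> 'a poly \<Rightarrow> 'a poly set" where
  "cls A X r = {Y. degree Y < degree (A * X) \<and> Y mod A = r mod A \<and> coprime X Y}"

lemma cop_mod:
  fixes X W A :: "'a::field poly"
  assumes "coprime X W"
  shows "coprime X (W mod (A * X))"
proof (rule coprimeI)
  fix d assume d: "d dvd X" "d dvd W mod (A * X)"
  have "W = W div (A * X) * (A * X) + W mod (A * X)" by (rule div_mult_mod_eq[symmetric])
  moreover have "d dvd W div (A * X) * (A * X) + W mod (A * X)" using d by simp
  ultimately have "d dvd W" by simp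
  then show "is_unit d" using assms d(1) by (auto simp: coprime_def)
qed

context
  fixes A :: "'a::{finite,field} poly"
  assumes monA: "lead_coeff A = 1" and irrA: "irreducible A"
begin

lemma A_nz: "A \<noteq> 0" using monA by auto

lemma degA: "degree A > 0" using irr_degree_pos[OF irrA] .

lemma deg_AX: "X \<noteq> 0 \<Longrightarrow> degree (A * X) = degree A + degree X"
  using A_nz by (simp add: degree_mult_eq)

lemma R_eq: "X \<noteq> 0 \<Longrightarrow> {Y. degree Y < degree (A * X)} = Pd (degree (A * X))"
  using deg_AX degA by (auto simp: Pd_iff)

lemma finite_cls: "X \<noteq> 0 \<Longrightarrow> finite (cls A X r)"
proof -
  assume "X \<noteq> 0"
  then have "cls A X r \<subseteq> Pd (degree (A * X))" using R_eq unfolding cls_def by blast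
  then show ?thesis using finite_Pd finite_subset by blast
qed

lemma card_F:
  assumes "X \<noteq> 0"
  shows "finite (Fset A X)" "card (Fset A X) = CARD('a) ^ degree X * (CARD('a) ^ degree A - 1)"
proof -
  let ?N = "degree (A * X)"
  define M where "M = (\<lambda>W. A * W) ` Pd (degree X)"
  have MR: "M \<subseteq> Pd ?N"
  proof
    fix Y assume "Y \<in> M"
    then obtain W where W: "W \<in> Pd (degree X)" "Y = A * W" unfolding M_def by blast
    show "Y \<in> Pd ?N"
    proof (cases "W = 0")
      case True then show ?thesis using W by (simp add: Pd_iff)
    next
      case False
      then have "degree Y = degree A + degree W" using W A_nz by (simp add: degree_mult_eq)
      then show ?thesis using W False deg_AX[OF assms] by (simp add: Pd_iff)
    qed
  qed
  have FM: "Fset A X = Pd ?N - M"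
  proof
    show "Fset A X \<subseteq> Pd ?N - M"
    proof
      fix Y assume "Y \<in> Fset A X"
      then have "degree Y < ?N" "\<not> A dvd Y" by (auto simp: Fset_def)
      moreover have "Y \<notin> M" using \<open>\<not> A dvd Y\<close> unfolding M_def by auto
      ultimately show "Y \<in> Pd ?N - M" by (simp add: Pd_iff)
    qed
    show "Pd ?N - M \<subseteq> Fset A X"
    proof
      fix Y assume Y: "Y \<in> Pd ?N - M"
      have "\<not> A dvd Y"
      proof
        assume "A dvd Y"
        then obtain W where W: "Y = A * W" by (auto elim: dvdE)
        have "W \<in> Pd (degree X)"
        proof (cases "W = 0")
          case True then show ?thesis by (simp add: Pd_iff)
        next
          case False
          then have "Y \<noteq> 0" "degree Y = degree A + degree W" using W A_nz by (auto simp: degree_mult_eq)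
          then have "degree Y < ?N" using Y by (auto simp: Pd_iff)
          then show ?thesis using \<open>degree Y = degree A + degree W\<close> deg_AX[OF assms] by (simp add: Pd_iff)
        qed
        then have "Y \<in> M" using W unfolding M_def by blast
        then show False using Y by blast
      qed
      moreover have "degree Y < ?N" using Y deg_AX[OF assms] degA by (auto simp: Pd_iff)
      ultimately show "Y \<in> Fset A X" by (simp add: Fset_def)
    qed
  qed
  have injM: "inj_on (\<lambda>W. A * W) (Pd (degree X))" using A_nz by (auto simp: inj_on_def)
  have cM: "card M = CARD('a) ^ degree X" unfolding M_def using card_image[OF injM] card_Pd by simp
  have fM: "finite M" using MR finite_Pd finite_subset by blast
  show "finite (Fset A X)" by (simp add: FM finite_Pd)
  have "card (Fset A X) = card (Pd ?N :: 'a poly set) - card M" using FM card_Diff_subset[OF fM MR] by simp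
  also have "\<dots> = CARD('a) ^ (degree A + degree X) - CARD('a) ^ degree X"
    using cM deg_AX[OF assms] by (simp add: card_Pd)
  also have "\<dots> = CARD('a) ^ degree X * (CARD('a) ^ degree A - 1)"
    by (simp add: power_add algebra_simps diff_mult_distrib2)
  finally show "card (Fset A X) = CARD('a) ^ degree X * (CARD('a) ^ degree A - 1)" .
qed

lemma cls_le:
  assumes X: "X \<noteq> 0" and c: "\<not> A dvd c"
  shows "card (cls A X r) \<le> card (cls A X (c * r))"
proof -
  obtain U where U: "coprime U X" "U mod A = c mod A" using exists_mult_unit[OF irrA X c] by blast
  define phi where "phi = (\<lambda>Y. (U * Y) mod (A * X))"
  have AX: "A * X \<noteq> 0" using A_nz X by simp
  have NA: "\<not> A dvd U"
  proof
    assume "A dvd U"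
    then have "U mod A = 0" by (simp add: dvd_eq_mod_eq_0)
    then have "A dvd c" using U(2) by (simp add: dvd_eq_mod_eq_0)
    then show False using c by simp
  qed
  have cUA: "coprime U (A * X)"
    using coprime_mult_poly[OF _ U(1)] irr_coprime[OF irrA NA] coprime_sym_poly by blast
  have Npos: "degree (A * X) > 0" using deg_AX[OF X] degA by simp
  have img: "phi ` cls A X r \<subseteq> cls A X (c * r)"
  proof
    fix Z assume "Z \<in> phi ` cls A X r"
    then obtain Y where Y: "Y \<in> cls A X r" "Z = phi Y" by blast
    have d: "degree Z < degree (A * X)"
    proof (cases "Z = 0")
      case True then show ?thesis using Npos by simp
    next
      case False then show ?thesis unfolding Y(2) phi_def using AX by (intro degree_mod_less') (auto simp: phi_def Y(2))
    qed
    have "Z mod A = (U * Y) mod A" unfolding Y(2) phi_def by (rule mod_mod_cancel) simp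
    also have "\<dots> = ((U mod A) * (Y mod A)) mod A" by (simp add: mod_mult_eq)
    also have "\<dots> = ((c mod A) * (r mod A)) mod A" using U(2) Y(1) by (simp add: cls_def)
    also have "\<dots> = (c * r) mod A" by (simp add: mod_mult_eq)
    finally have m: "Z mod A = (c * r) mod A" .
    have "coprime X (U * Y)" using coprime_mult_poly[of X U Y] U(1) Y(1) coprime_sym_poly by (auto simp: cls_def)
    then have "coprime X Z" unfolding Y(2) phi_def by (rule cop_mod)
    then show "Z \<in> cls A X (c * r)" using d m by (simp add: cls_def)
  qed
  have inj: "inj_on phi (cls A X r)"
  proof (rule inj_onI)
    fix Y1 Y2 assume Y1: "Y1 \<in> cls A X r" and Y2: "Y2 \<in> cls A X r" and eq: "phi Y1 = phi Y2"
    then have "A * X dvd U * Y1 - U * Y2" unfolding phi_def by (simp add: mod_eq_dvd_iff)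
    then have "A * X dvd U * (Y1 - Y2)" by (simp add: right_diff_distrib)
    then have dv: "A * X dvd Y1 - Y2" using coprime_dvd_poly[of "A * X" U] cUA coprime_sym_poly by blast
    show "Y1 = Y2"
    proof (rule ccontr)
      assume "Y1 \<noteq> Y2"
      then have "Y1 - Y2 \<noteq> 0" by simp
      then have "degree (A * X) \<le> degree (Y1 - Y2)" using dv by (rule dvd_imp_degree_le[rotated])
      moreover have "degree (Y1 - Y2) \<le> max (degree Y1) (degree Y2)" by (rule degree_diff_le_max)
      moreover have "degree Y1 < degree (A * X)" "degree Y2 < degree (A * X)" using Y1 Y2 by (auto simp: cls_def)
      ultimately show False by simp
    qed
  qed
  show ?thesis by (rule card_inj_on_le[OF inj img finite_cls[OF X]])
qed

lemma cls_cong: "r1 mod A = r2 mod A \<Longrightarrow> cls A X r1 = cls A X r2"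
  by (simp add: cls_def)

lemma cls_eq:
  assumes X: "X \<noteq> 0" and r: "r \<noteq> 0" "degree r < degree A"
  shows "card (cls A X r) = card (cls A X 1)"
proof -
  have nr: "\<not> A dvd r"
  proof
    assume "A dvd r"
    then have "degree A \<le> degree r" using r(1) by (rule dvd_imp_degree_le)
    then show False using r(2) by simp
  qed
  have "card (cls A X 1) \<le> card (cls A X (r * 1))" by (rule cls_le[OF X nr])
  moreover obtain c where c: "\<not> A dvd c" "(c * r) mod A = 1 mod A" using exists_inverse_mod[OF irrA nr] by blast
  have "card (cls A X r) \<le> card (cls A X (c * r))" by (rule cls_le[OF X c(1)])
  moreover have "cls A X (c * r) = cls A X 1" using c(2) by (rule cls_cong)
  ultimately show ?thesis by simp
qed

lemma card_F':
  assumes X: "X \<noteq> 0"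
  shows "finite (F'set A X)" "card (F'set A X) = (CARD('a) ^ degree A - 1) * count_Y A X"
proof -
  define Res where "Res = Pd (degree A) - {0 :: 'a poly}"
  have Res_iff: "r \<in> Res \<longleftrightarrow> r \<noteq> 0 \<and> degree r < degree A" for r by (auto simp: Res_def Pd_iff)
  have U: "F'set A X = (\<Union>r\<in>Res. cls A X r)"
  proof
    show "F'set A X \<subseteq> (\<Union>r\<in>Res. cls A X r)"
    proof
      fix Y assume Y: "Y \<in> F'set A X"
      then have "Y mod A \<noteq> 0" by (auto simp: F'set_def dvd_eq_mod_eq_0)
      then have "Y mod A \<in> Res" using A_nz by (simp add: Res_iff degree_mod_less')
      moreover have "Y \<in> cls A X (Y mod A)" using Y by (simp add: F'set_def cls_def)
      ultimately show "Y \<in> (\<Union>r\<in>Res. cls A X r)" by blast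
    qed
    show "(\<Union>r\<in>Res. cls A X r) \<subseteq> F'set A X"
    proof
      fix Y assume "Y \<in> (\<Union>r\<in>Res. cls A X r)"
      then obtain r where r: "r \<in> Res" "Y \<in> cls A X r" by blast
      have "Y mod A = r" using r by (simp add: cls_def Res_iff mod_poly_less)
      then have "\<not> A dvd Y" using r(1) by (simp add: Res_iff dvd_eq_mod_eq_0)
      then show "Y \<in> F'set A X" using r(2) by (simp add: cls_def F'set_def)
    qed
  qed
  have fRes: "finite Res" unfolding Res_def using finite_Pd by simp
  have disj: "\<forall>i\<in>Res. \<forall>j\<in>Res. i \<noteq> j \<longrightarrow> cls A X i \<inter> cls A X j = {}"
  proof (intro ballI impI)
    fix i j assume i: "i \<in> Res" and j: "j \<in> Res" and ij: "i \<noteq> j"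
    show "cls A X i \<inter> cls A X j = {}"
    proof (rule ccontr)
      assume "cls A X i \<inter> cls A X j \<noteq> {}"
      then obtain Y where "Y \<in> cls A X i" "Y \<in> cls A X j" by blast
      then have "i mod A = j mod A" by (simp add: cls_def)
      then have "i = j" using i j by (simp add: Res_iff mod_poly_less)
      then show False using ij by simp
    qed
  qed
  have "card (F'set A X) = (\<Sum>r\<in>Res. card (cls A X r))"
    unfolding U by (rule card_UN_disjoint[OF fRes _ disj]) (use finite_cls[OF X] in blast)
  also have "\<dots> = (\<Sum>r\<in>Res. card (cls A X 1))"
    by (rule sum.cong) (auto simp: Res_iff intro: cls_eq[OF X])
  also have "\<dots> = card Res * count_Y A X" by (simp add: cls_def count_Y_def)
  also have "card Res = CARD('a) ^ degree A - 1"
    unfolding Res_def by (simp add: card_Pd finite_Pd Pd_iff card_Diff_singleton)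
  finally show "card (F'set A X) = (CARD('a) ^ degree A - 1) * count_Y A X" .
  show "finite (F'set A X)" unfolding U using fRes finite_cls[OF X] by blast
qed

end



definition mg :: "'a::field poly \<Rightarrow> 'a poly \<Rightarrow> 'a poly" where
  "mg X Y = (SOME D. lead_coeff D = 1 \<and> D dvd X \<and> D dvd Y \<and> (\<exists>u v. D = u * X + v * Y))"

lemma mg_props:
  fixes X Y :: "'a::field poly"
  assumes "X \<noteq> 0"
  shows "lead_coeff (mg X Y) = 1 \<and> mg X Y dvd X \<and> mg X Y dvd Y \<and> (\<exists>u v. mg X Y = u * X + v * Y)"
proof -
  have "\<exists>D. lead_coeff D = 1 \<and> D dvd X \<and> D dvd Y \<and> (\<exists>u v. D = u * X + v * Y)"
    using bezout_poly[OF assms, of Y] by blast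
  then show ?thesis unfolding mg_def by (rule someI_ex)
qed

lemma monic_assoc_eq:
  fixes D G :: "'a::field poly"
  assumes "lead_coeff D = 1" "lead_coeff G = 1" "D dvd G" "G dvd D"
  shows "G = D"
proof -
  obtain k where k: "G = D * k" using assms(3) by (auto elim: dvdE)
  obtain k' where k': "D = G * k'" using assms(4) by (auto elim: dvdE)
  have D0: "D \<noteq> 0" using assms(1) by auto
  have e: "D * (k * k') = D * 1"
  proof -
    have "D * (k * k') = (D * k) * k'" by (simp add: mult.assoc)
    also have "\<dots> = D" using k k' by simp
    finally show ?thesis by simp
  qed
  then have "k * k' = 1" using mult_left_cancel[OF D0] by blast
  then have "is_unit k" by (metis dvd_triv_left)
  moreover have "lead_coeff k = 1" using k assms(1,2) by (simp add: lead_coeff_mult)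
  ultimately have "k = 1" by (rule unit_monic_eq_1)
  then show ?thesis using k by simp
qed

lemma mg_unique:
  fixes X Y D :: "'a::field poly"
  assumes "X \<noteq> 0" "lead_coeff D = 1" "D dvd X" "D dvd Y" "D = u * X + v * Y"
  shows "mg X Y = D"
proof -
  have P: "lead_coeff (mg X Y) = 1 \<and> mg X Y dvd X \<and> mg X Y dvd Y \<and> (\<exists>u v. mg X Y = u * X + v * Y)"
    by (rule mg_props[OF assms(1)])
  then obtain u' v' where uv': "mg X Y = u' * X + v' * Y" by blast
  have "D dvd mg X Y" unfolding uv' using assms(3,4) by simp
  moreover have "mg X Y dvd D" unfolding assms(5) using P by simp
  ultimately show ?thesis using monic_assoc_eq[OF assms(2)] P by blast
qed

definition SA :: "'a::field poly \<Rightarrow> 'a poly set" where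
  "SA A = {X. X \<noteq> 0 \<and> lead_coeff X = 1 \<and> A dvd X}"
definition Dc :: "'a::field poly \<Rightarrow> 'a poly set" where
  "Dc A = {D. lead_coeff D = 1 \<and> \<not> A dvd D}"

context
  fixes A :: "'a::{finite,field} poly"
  assumes monA: "lead_coeff A = 1" and irrA: "irreducible A"
begin

lemma A_nz': "A \<noteq> 0" using monA by auto

lemma bij_part:
  fixes h :: "'a poly \<times> 'a poly \<Rightarrow> complex" and g
  assumes hg: "\<And>D X' Y'. D \<in> Dc A \<Longrightarrow> (X', Y') \<in> Sigma (SA A) (F'set A) \<Longrightarrow> h (D * X', D * Y') = g (D, (X', Y'))"
  shows "(g has_sum s) (Dc A \<times> Sigma (SA A) (F'set A)) = (h has_sum s) (Sigma (SA A) (Fset A))"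
proof (rule has_sum_reindex_bij_witness[where i = "\<lambda>(X, Y). (mg X Y, (X div mg X Y, Y div mg X Y))"
      and j = "\<lambda>(D, (X', Y')). (D * X', D * Y')"])
  fix a assume a: "a \<in> Dc A \<times> Sigma (SA A) (F'set A)"
  then obtain D X' Y' where aa: "a = (D, (X', Y'))" "D \<in> Dc A" "X' \<in> SA A" "Y' \<in> F'set A X'" by auto
  have D: "lead_coeff D = 1" "\<not> A dvd D" using aa by (auto simp: Dc_def)
  have X': "X' \<noteq> 0" "lead_coeff X' = 1" "A dvd X'" using aa by (auto simp: SA_def)
  have Y': "degree Y' < degree (A * X')" "\<not> A dvd Y'" "coprime X' Y'" using aa by (auto simp: F'set_def)
  have D0: "D \<noteq> 0" using D by auto
  have DX: "D * X' \<noteq> 0" using D0 X' by simp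
  obtain u v where uv: "u * X' + v * Y' = 1" using Y'(3) coprime_bezout by blast
  have "D = u * (D * X') + v * (D * Y')"
  proof -
    have "D = D * (u * X' + v * Y')" using uv by simp
    then show ?thesis by (simp add: algebra_simps)
  qed
  then have mg: "mg (D * X') (D * Y') = D" by (intro mg_unique[OF DX D(1)]) auto
  show "(\<lambda>(X, Y). (mg X Y, X div mg X Y, Y div mg X Y)) ((\<lambda>(D, X', Y'). (D * X', D * Y')) a) = a"
    using aa(1) mg D0 by simp
  have Y0: "Y' \<noteq> 0" using Y'(2) by auto
  have "degree (D * Y') = degree D + degree Y'" using D0 Y0 by (simp add: degree_mult_eq)
  also have "\<dots> < degree D + degree (A * X')" using Y'(1) by simp
  also have "\<dots> = degree (A * (D * X'))" using D0 X'(1) A_nz' by (simp add: degree_mult_eq)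
  finally have dg: "degree (D * Y') < degree (A * (D * X'))" .
  have ndv: "\<not> A dvd D * Y'" using irr_prime[OF irrA, of D Y'] D(2) Y'(2) by blast
  show "(\<lambda>(D, X', Y'). (D * X', D * Y')) a \<in> Sigma (SA A) (Fset A)"
    using aa(1) DX D(1) X'(2,3) dg ndv by (auto simp: SA_def Fset_def lead_coeff_mult)
  show "h ((\<lambda>(D, X', Y'). (D * X', D * Y')) a) = g a" using aa hg by simp
next
  fix b assume b: "b \<in> Sigma (SA A) (Fset A)"
  then obtain X Y where bb: "b = (X, Y)" "X \<in> SA A" "Y \<in> Fset A X" by auto
  have X: "X \<noteq> 0" "lead_coeff X = 1" "A dvd X" using bb by (auto simp: SA_def)
  have Y: "degree Y < degree (A * X)" "\<not> A dvd Y" using bb by (auto simp: Fset_def)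
  define G where "G = mg X Y"
  have G: "lead_coeff G = 1" "G dvd X" "G dvd Y" using mg_props[OF X(1), of Y] by (auto simp: G_def)
  obtain u v where uv: "G = u * X + v * Y" using mg_props[OF X(1), of Y] by (auto simp: G_def)
  have G0: "G \<noteq> 0" using G by auto
  define X' where "X' = X div G"
  define Y' where "Y' = Y div G"
  have XX: "X = G * X'" unfolding X'_def using G(2) by simp
  have YY: "Y = G * Y'" unfolding Y'_def using G(3) by simp
  show "(\<lambda>(D, X', Y'). (D * X', D * Y')) ((\<lambda>(X, Y). (mg X Y, X div mg X Y, Y div mg X Y)) b) = b"
    using bb(1) G(2,3) by (simp add: G_def[symmetric])
  have nAG: "\<not> A dvd G" using G(3) Y(2) dvd_trans by blast
  have X'0: "X' \<noteq> 0" using XX X(1) by auto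
  have lX': "lead_coeff X' = 1" using XX X(2) G(1) by (simp add: lead_coeff_mult)
  have AX': "A dvd X'" using irr_prime[OF irrA, of G X'] XX X(3) nAG by simp
  have nAY': "\<not> A dvd Y'" using YY Y(2) by auto
  have Y'0: "Y' \<noteq> 0" using nAY' by auto
  have "degree G + degree Y' = degree Y" using YY G0 Y'0 by (simp add: degree_mult_eq)
  also have "\<dots> < degree (A * X)" by (rule Y(1))
  also have "\<dots> = degree G + degree (A * X')" using XX G0 X'0 A_nz' by (simp add: degree_mult_eq)
  finally have dY': "degree Y' < degree (A * X')" by simp
  have "G * (u * X' + v * Y') = G * 1" using uv XX YY by (simp add: algebra_simps)
  then have "u * X' + v * Y' = 1" using mult_left_cancel[OF G0] by blast
  then have cp: "coprime X' Y'" using coprime_bezout by blast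
  have nAG': "G \<in> Dc A" using G(1) nAG by (simp add: Dc_def)
  show "(\<lambda>(X, Y). (mg X Y, X div mg X Y, Y div mg X Y)) b \<in> Dc A \<times> Sigma (SA A) (F'set A)"
    using bb(1) nAG' X'0 lX' AX' dY' nAY' cp
    by (simp add: G_def[symmetric] X'_def[symmetric] Y'_def[symmetric] SA_def F'set_def)
qed simp

end



lemma card_ge2: "real CARD('a::{finite,field}) \<ge> 2"
proof -
  have "card {0::'a, 1} \<le> CARD('a)" by (rule card_mono) auto
  then show ?thesis by simp
qed

context
  fixes A :: "'a::{finite,field} poly"
  assumes monA: "lead_coeff A = 1" and irrA: "irreducible A"
begin

lemma A_nz'': "A \<noteq> 0" using monA by auto

lemma hsS:
  fixes u :: complex
  assumes "norm (of_nat CARD('a) * u) < 1"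
  shows "((\<lambda>X. u ^ degree X) has_sum (u ^ degree A / (1 - of_nat CARD('a) * u))) (SA A)"
proof -
  let ?M = "{Z::'a poly. lead_coeff Z = 1}"
  have "((\<lambda>Z::'a poly. u ^ degree A * u ^ degree Z) has_sum (u ^ degree A * (1 / (1 - of_nat CARD('a) * u)))) ?M"
    by (rule has_sum_cmult_right[OF zeta_has_sum[OF assms]])
  then have h2: "((\<lambda>Z. u ^ degree (A * Z)) has_sum (u ^ degree A / (1 - of_nat CARD('a) * u))) ?M"
  proof (subst has_sum_cong[where g = "\<lambda>Z. u ^ degree A * u ^ degree Z"])
    fix Z :: "'a poly" assume "Z \<in> ?M"
    then have "Z \<noteq> 0" by auto
    then show "u ^ degree (A * Z) = u ^ degree A * u ^ degree Z"
      using A_nz'' by (simp add: degree_mult_eq power_add)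
  qed simp
  have bij: "bij_betw (\<lambda>Z. A * Z) ?M (SA A)"
  proof (rule bij_betwI')
    fix x y :: "'a poly" show "(A * x = A * y) = (x = y)" using A_nz'' by simp
  next
    fix x :: "'a poly" assume "x \<in> ?M"
    then show "A * x \<in> SA A" using A_nz'' monA by (auto simp: SA_def lead_coeff_mult)
  next
    fix y :: "'a poly" assume y: "y \<in> SA A"
    then have e: "y = A * (y div A)" by (simp add: SA_def)
    then have "lead_coeff y = lead_coeff (y div A)" using monA by (metis lead_coeff_mult mult_1)
    then have "y div A \<in> ?M" using y by (simp add: SA_def)
    then show "\<exists>x\<in>?M. y = A * x" using e by blast
  qed
  show ?thesis using has_sum_reindex_bij_betw[OF bij, of "\<lambda>X. u ^ degree X"] h2 by simp
qed

lemma hsDc: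
  fixes u :: complex
  assumes "norm (of_nat CARD('a) * u) < 1"
  shows "((\<lambda>X. u ^ degree X) has_sum ((1 - u ^ degree A) / (1 - of_nat CARD('a) * u))) (Dc A)"
proof -
  let ?M = "{Z::'a poly. lead_coeff Z = 1}"
  have hM: "((\<lambda>X. u ^ degree X) has_sum (1 / (1 - of_nat CARD('a) * u))) ?M" by (rule zeta_has_sum[OF assms])
  have "Dc A \<subseteq> ?M" by (auto simp: Dc_def)
  then have "(\<lambda>X. u ^ degree X) summable_on Dc A"
    using summable_on_subset_banach[OF has_sum_imp_summable[OF hM]] by blast
  then obtain V where V: "((\<lambda>X. u ^ degree X) has_sum V) (Dc A)" by (auto simp: summable_on_def)
  have "((\<lambda>X. u ^ degree X) has_sum (V + u ^ degree A / (1 - of_nat CARD('a) * u))) (Dc A \<union> SA A)"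
    by (rule has_sum_Un_disjoint[OF V hsS[OF assms]]) (auto simp: Dc_def SA_def)
  moreover have "Dc A \<union> SA A = ?M" by (auto simp: Dc_def SA_def)
  ultimately have "V + u ^ degree A / (1 - of_nat CARD('a) * u) = 1 / (1 - of_nat CARD('a) * u)"
    using hM has_sum_unique by metis
  then have "V = 1 / (1 - of_nat CARD('a) * u) - u ^ degree A / (1 - of_nat CARD('a) * u)"
    by (simp add: eq_diff_eq)
  then show ?thesis using V by (simp add: diff_divide_distrib)
qed

end



lemma alg_aux:
  fixes K d1 d2 d3 S T P :: complex
  assumes "K \<noteq> 0" "d1 \<noteq> 0" "d2 \<noteq> 0" "d3 \<noteq> 0" "S = d3 / d1 * T" "S = K * (P / d2)"
  shows "(1 / K) * T = P * d1 / (d2 * d3)"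
proof -
  have "T = S * d1 / d3" using assms(2,4,5) by (simp add: field_simps)
  then show ?thesis using assms by (simp add: field_simps)
qed

context
  fixes A :: "'a::{finite,field} poly"
  assumes monA: "lead_coeff A = 1" and irrA: "irreducible A"
begin

lemma main_sum:
  fixes z :: complex
  assumes z: "norm (of_nat CARD('a) * (of_nat CARD('a) * z)) < 1"
  defines "qc \<equiv> (of_nat CARD('a) :: complex)"
  shows "((\<lambda>X. z ^ degree X * of_nat (count_Y A X)) has_sum
          ((qc * z) ^ degree A * (1 - qc * z) / ((1 - qc * (qc * z)) * (1 - z ^ degree A)))) (SA A)"
proof -
  let ?q = "CARD('a)"
  let ?a = "degree A"
  define \<rho> where "\<rho> = norm z"
  define r where "r = real ?q * \<rho>"
  have q2: "real ?q \<ge> 2" by (rule card_ge2)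
  have \<rho>0: "\<rho> \<ge> 0" by (simp add: \<rho>_def)
  have qqr: "real ?q * r < 1" using z by (simp add: r_def \<rho>_def norm_mult)
  have r0: "r \<ge> 0" using \<rho>0 by (simp add: r_def)
  have r1: "r < 1"
  proof -
    have "r \<le> real ?q * r" using q2 r0 by (simp add: mult_le_cancel_right1)
    then show ?thesis using qqr by simp
  qed
  have \<rho>1: "\<rho> < 1"
  proof -
    have "\<rho> \<le> real ?q * \<rho>" using q2 \<rho>0 by (simp add: mult_le_cancel_right1)
    then show ?thesis using r1 by (simp add: r_def)
  qed
  have n1: "norm (qc * z) < 1" using r1 by (simp add: qc_def r_def \<rho>_def norm_mult)
  have n2: "norm (qc * (qc * z)) < 1" using z by (simp add: qc_def)
  have apos: "?a > 0" using irr_degree_pos[OF irrA] .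
  have qa1: "?q ^ ?a \<ge> 2"
  proof -
    have "?q \<ge> 2" using q2 by simp
    then have "?q ^ 1 \<le> ?q ^ ?a" using apos by (intro power_increasing) auto
    then show ?thesis using \<open>?q \<ge> 2\<close> by simp
  qed
  have qa00: "?q ^ ?a - 1 \<noteq> 0" using qa1 by linarith
  have qa0: "(of_nat (?q ^ ?a - 1) :: complex) \<noteq> 0" using qa00 by (metis of_nat_eq_0_iff)
  have d1: "1 - qc * z \<noteq> 0"
  proof
    assume "1 - qc * z = 0"
    then have "qc * z = 1" by simp
    then show False using n1 by simp
  qed
  have d2: "1 - qc * (qc * z) \<noteq> 0"
  proof
    assume "1 - qc * (qc * z) = 0"
    then have "qc * (qc * z) = 1" by simp
    then show False using n2 by simp
  qed
  have d3: "1 - z ^ ?a \<noteq> 0"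
  proof
    assume "1 - z ^ ?a = 0"
    then have "z ^ ?a = 1" by simp
    then have "norm (z ^ ?a) = 1" by simp
    moreover have "norm (z ^ ?a) < 1" using \<rho>1 \<rho>0 apos by (simp add: norm_power \<rho>_def power_less_one_iff)
    ultimately show False by simp
  qed
  define Q where "Q = Sigma (SA A) (Fset A)"
  define Q' where "Q' = Sigma (SA A) (F'set A)"
  define h where "h = (\<lambda>p :: 'a poly \<times> 'a poly. z ^ degree (fst p))"
  define SQ where "SQ = of_nat (?q ^ ?a - 1) * ((qc * z) ^ ?a / (1 - qc * (qc * z)))"
  have rS: "(\<lambda>X. r ^ degree X) summable_on SA A"
  proof -
    have "norm (of_nat ?q * complex_of_real r) < 1" using qqr r0 by (simp add: norm_mult)
    from hsS[OF monA irrA this] have "(\<lambda>X. complex_of_real r ^ degree X) summable_on SA A"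
      by (rule has_sum_imp_summable)
    then have "(\<lambda>X. norm (complex_of_real r ^ degree X)) summable_on SA A"
      by (simp add: summable_on_iff_abs_summable_on_complex)
    then show ?thesis using r0 by (simp add: norm_power)
  qed
  have nsQ: "(\<lambda>p. norm (h p)) summable_on Q"
    unfolding Q_def
  proof (rule summable_on_SigmaI[where g = "\<lambda>X. real (?q ^ ?a - 1) * r ^ degree X"])
    fix X assume X: "X \<in> SA A"
    then have X0: "X \<noteq> 0" by (simp add: SA_def)
    have "(\<Sum>Y\<in>Fset A X. norm (h (X, Y))) = real (card (Fset A X)) * \<rho> ^ degree X"
      by (simp add: h_def norm_power \<rho>_def)
    also have "\<dots> = real (?q ^ ?a - 1) * r ^ degree X"
      using card_F(2)[OF monA irrA X0] by (simp add: r_def power_mult_distrib)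
    finally show "((\<lambda>Y. norm (h (X, Y))) has_sum real (?q ^ ?a - 1) * r ^ degree X) (Fset A X)"
      using card_F(1)[OF monA irrA X0] by (simp add: has_sum_finiteI)
  next
    show "(\<lambda>X. real (?q ^ ?a - 1) * r ^ degree X) summable_on SA A"
      by (rule summable_on_cmult_right[OF rS])
  next
    fix X Y show "0 \<le> norm (h (X, Y))" by simp
  qed
  then have sQ: "h summable_on Q" by (rule abs_summable_summable)
  have hsQ: "(h has_sum SQ) Q"
    unfolding Q_def
  proof (rule has_sum_SigmaI[where g = "\<lambda>X. z ^ degree X * of_nat (card (Fset A X))"])
    fix X assume X: "X \<in> SA A"
    then have X0: "X \<noteq> 0" by (simp add: SA_def)
    show "((\<lambda>Y. h (X, Y)) has_sum z ^ degree X * of_nat (card (Fset A X))) (Fset A X)"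
      using card_F(1)[OF monA irrA X0] by (intro has_sum_finiteI) (simp_all add: h_def mult.commute)
  next
    have "((\<lambda>X. of_nat (?q ^ ?a - 1) * (qc * z) ^ degree X) has_sum SQ) (SA A)"
      unfolding SQ_def by (rule has_sum_cmult_right[OF hsS[OF monA irrA n2[unfolded qc_def]], unfolded qc_def[symmetric]])
    then show "((\<lambda>X. z ^ degree X * of_nat (card (Fset A X))) has_sum SQ) (SA A)"
    proof (subst has_sum_cong)
      fix X assume X: "X \<in> SA A"
      then have X0: "X \<noteq> 0" by (simp add: SA_def)
      show "z ^ degree X * of_nat (card (Fset A X)) = of_nat (?q ^ ?a - 1) * (qc * z) ^ degree X"
        using card_F(2)[OF monA irrA X0] by (simp add: qc_def power_mult_distrib)
    qed simp
  next
    show "h summable_on Sigma (SA A) (Fset A)" using sQ by (simp add: Q_def)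
  qed
  define g where "g = (\<lambda>(D :: 'a poly, p :: 'a poly \<times> 'a poly). z ^ degree D * z ^ degree (fst p))"
  have hsG: "(g has_sum SQ) (Dc A \<times> Q')"
    unfolding Q'_def
  proof (subst bij_part[OF monA irrA])
    fix D X' Y' assume D: "D \<in> Dc A" and XY: "(X', Y') \<in> Sigma (SA A) (F'set A)"
    have "D \<noteq> 0" "X' \<noteq> 0" using D XY by (auto simp: Dc_def SA_def)
    then show "h (D * X', D * Y') = g (D, X', Y')"
      by (simp add: h_def g_def degree_mult_eq power_add)
  next
    show "(h has_sum SQ) (Sigma (SA A) (Fset A))" using hsQ by (simp add: Q_def)
  qed
  have one: "1 \<in> Dc A"
  proof -
    have "\<not> is_unit A" using irrA by (simp add: irreducible_def)
    then have "\<not> A dvd 1" by simp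
    then show ?thesis by (simp add: Dc_def)
  qed
  have "(\<lambda>(D, p). z ^ degree D * z ^ degree (fst p)) summable_on Sigma (Dc A) (\<lambda>_. Q')"
    using has_sum_imp_summable[OF hsG] by (simp add: g_def)
  from summable_on_SigmaD1[OF this one]
  have "(\<lambda>p. z ^ degree (fst p)) summable_on Q'" by simp
  then obtain T' where T': "((\<lambda>p. z ^ degree (fst p)) has_sum T') Q'" by (auto simp: summable_on_def)
  have "((\<lambda>D. z ^ degree D * T') has_sum SQ) (Dc A)"
  proof (rule has_sum_Sigma'[where B = "\<lambda>_. Q'"])
    show "(g has_sum SQ) (Sigma (Dc A) (\<lambda>_. Q'))" using hsG by simp
    fix D assume "D \<in> Dc A"
    show "((\<lambda>y. g (D, y)) has_sum z ^ degree D * T') Q'"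
      unfolding g_def by (simp add: has_sum_cmult_right[OF T'])
  qed
  moreover have "((\<lambda>D. z ^ degree D * T') has_sum ((1 - z ^ ?a) / (1 - qc * z) * T')) (Dc A)"
    by (rule has_sum_cmult_left[OF hsDc[OF monA irrA n1[unfolded qc_def], unfolded qc_def[symmetric]]])
  ultimately have SQeq: "SQ = (1 - z ^ ?a) / (1 - qc * z) * T'" using has_sum_unique by blast
  have "((\<lambda>X. z ^ degree X * of_nat (card (F'set A X))) has_sum T') (SA A)"
  proof (rule has_sum_Sigma'[where B = "F'set A"])
    show "((\<lambda>p. z ^ degree (fst p)) has_sum T') (Sigma (SA A) (F'set A))" using T' by (simp add: Q'_def)
    fix X assume X: "X \<in> SA A"
    then have X0: "X \<noteq> 0" by (simp add: SA_def)
    show "((\<lambda>y. z ^ degree (fst (X, y))) has_sum z ^ degree X * of_nat (card (F'set A X))) (F'set A X)"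
      using card_F'(1)[OF monA irrA X0] by (intro has_sum_finiteI) (simp_all add: mult.commute)
  qed
  then have "((\<lambda>X. (1 / of_nat (?q ^ ?a - 1)) * (z ^ degree X * of_nat (card (F'set A X)))) has_sum
      ((1 / of_nat (?q ^ ?a - 1)) * T')) (SA A)"
    by (rule has_sum_cmult_right)
  then have fin: "((\<lambda>X. z ^ degree X * of_nat (count_Y A X)) has_sum ((1 / of_nat (?q ^ ?a - 1)) * T')) (SA A)"
  proof (subst (asm) has_sum_cong)
    fix X assume X: "X \<in> SA A"
    then have X0: "X \<noteq> 0" by (simp add: SA_def)
    show "(1 / of_nat (?q ^ ?a - 1)) * (z ^ degree X * of_nat (card (F'set A X))) = z ^ degree X * of_nat (count_Y A X)"
      using card_F'(2)[OF monA irrA X0] qa0 by (simp add: field_simps)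
  qed simp
  have "(1 / of_nat (?q ^ ?a - 1)) * T' = (qc * z) ^ ?a * (1 - qc * z) / ((1 - qc * (qc * z)) * (1 - z ^ ?a))"
    by (rule alg_aux[OF qa0 d1 d2 d3 SQeq SQ_def])
  then show ?thesis using fin by simp
qed

end



lemma alg2:
  fixes P d1 d2 d3 :: complex
  shows "P / d3 * ((1 / d2) / (1 / d1)) = P * d1 / (d2 * d3)"
  by (simp add: divide_inverse inverse_mult_distrib mult_ac)

theorem lemma3p5:
  fixes A :: "'a::{finite,field} poly" and s :: complex
  assumes "prime (CARD('a))" and "CARD('a) > 3"
    and "lead_coeff A = 1" and "irreducible A"
    and "Re s > 1"
  shows "((\<lambda>X. pnorm X powr (- (2 * s)) * of_nat (count_Y A X)) has_sum
           (of_nat (CARD('a)) powr (of_nat (degree A) * (1 - 2 * s))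
              / (1 - of_nat (CARD('a)) powr (- 2 * of_nat (degree A) * s))
            * (zeta_Fq TYPE('a) (2 * s - 1) / zeta_Fq TYPE('a) (2 * s))))
         {X. X \<noteq> 0 \<and> lead_coeff X = 1 \<and> A dvd X}"
proof -
  let ?q = "CARD('a)"
  let ?a = "degree A"
  define qc where "qc = (of_nat ?q :: complex)"
  define z where "z = qc powr (-(2 * s))"
  have q2: "real ?q \<ge> 2" by (rule card_ge2)
  have qpos: "0 < ?q" using q2 by simp
  have nz: "norm z = real ?q powr (-2 * Re s)" by (simp add: z_def qc_def norm_of_nat_powr)
  have "norm (qc * (qc * z)) = real ?q * real ?q * real ?q powr (-2 * Re s)"
    by (simp add: norm_mult nz qc_def)
  also have "\<dots> = real ?q powr (2 + (-2 * Re s))"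
  proof -
    have e1: "real ?q powr (2 + (-2 * Re s)) = real ?q powr 2 * real ?q powr (-2 * Re s)" by (rule powr_add)
    have e2: "real ?q powr 2 = real ?q * real ?q" using q2 by (subst powr_numeral) (auto simp: power2_eq_square)
    show ?thesis by (simp only: e1 e2)
  qed
  also have "\<dots> < 1" using q2 assms(5) by (intro powr_less_one) auto
  finally have n2: "norm (of_nat ?q * (of_nat ?q * z)) < 1" by (simp add: qc_def)
  have ms: "((\<lambda>X. z ^ degree X * of_nat (count_Y A X)) has_sum
          ((qc * z) ^ ?a * (1 - qc * z) / ((1 - qc * (qc * z)) * (1 - z ^ ?a)))) (SA A)"
    using main_sum[OF assms(3,4) n2] by (simp add: qc_def)
  have pz: "qc powr (1 + w) = qc * qc powr w" for w
    using qpos by (simp add: powr_add qc_def)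
  have t1: "of_nat ?q powr (of_nat ?a * (1 - 2 * s)) = (qc * z) ^ ?a"
  proof -
    have "of_nat ?q powr (of_nat ?a * (1 - 2 * s)) = (qc powr (1 - 2 * s)) ^ ?a"
      using powr_mult_nat[OF qpos] by (simp add: qc_def)
    also have "qc powr (1 - 2 * s) = qc * z" using pz[of "-(2 * s)"] by (simp add: z_def)
    finally show ?thesis .
  qed
  have t2: "of_nat ?q powr (- 2 * of_nat ?a * s) = z ^ ?a"
  proof -
    have e: "- 2 * of_nat ?a * s = of_nat ?a * (-(2 * s))" by simp
    show ?thesis unfolding e z_def qc_def by (rule powr_mult_nat[OF qpos])
  qed
  have t3: "zeta_Fq TYPE('a) (2 * s) = 1 / (1 - qc * z)"
    using zeta_Fq_eq[of "2 * s", where 'a='a] assms(5) by (simp add: z_def qc_def)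
  have t4: "zeta_Fq TYPE('a) (2 * s - 1) = 1 / (1 - qc * (qc * z))"
  proof -
    have "zeta_Fq TYPE('a) (2 * s - 1) = 1 / (1 - qc * qc powr (-(2 * s - 1)))"
      using zeta_Fq_eq[of "2 * s - 1", where 'a='a] assms(5) by (simp add: qc_def)
    also have "qc powr (-(2 * s - 1)) = qc * z" using pz[of "-(2 * s)"] by (simp add: z_def)
    finally show ?thesis .
  qed
  have val: "of_nat ?q powr (of_nat ?a * (1 - 2 * s)) / (1 - of_nat ?q powr (- 2 * of_nat ?a * s))
            * (zeta_Fq TYPE('a) (2 * s - 1) / zeta_Fq TYPE('a) (2 * s))
        = (qc * z) ^ ?a * (1 - qc * z) / ((1 - qc * (qc * z)) * (1 - z ^ ?a))"
    unfolding t1 t2 t3 t4 by (rule alg2)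
  have "((\<lambda>X. pnorm X powr (- (2 * s)) * of_nat (count_Y A X)) has_sum
          ((qc * z) ^ ?a * (1 - qc * z) / ((1 - qc * (qc * z)) * (1 - z ^ ?a)))) (SA A)"
    using ms by (simp add: pnorm_powr z_def qc_def)
  then show ?thesis unfolding val[symmetric] SA_def .
qed


end
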